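(* Let $k$ be a field, $S=k[x_1,\dots,x_n]$, and let $\Delta$ be a connected simplicial graph on $[n]$ of genus $0$ (a tree). Let $M$ be an indecomposable square-free $S$-module (not necessarily Cohen--Macaulay) with support on $\Delta$, locally of rank $1$, of multi-degree $(0,0,\dots,0)$. Then $M$ is isomorphic to a module for which, after identifying $M_{\{v\}}=k$ for every vertex $v$ and $M_e=k$ for every edge $e$, each map $\varphi_{ve}:M_{\{v\}}\to M_e$ equals $1$ (the identity) if $v\in e$ (and is $0$ otherwise).
   Context: $S$ is $\mathbf{Z}^n$-graded. A finitely generated $\mathbf{Z}^n$-graded $S$-module $M$ is square-free if $M_{\mathbf{a}}=0$ for $\mathbf{a}\notin\mathbf{N}^n$ and multiplication by $x_i$, $M_{\mathbf{a}}\to M_{\mathbf{a}+\mathbf{e}_i}$, is bijective whenever $\mathbf{a}\in\mathbf{N}^n$ and $a_i>0$. For $F\subseteq[n]$, $M_F$ is the component of $M$ in the degree given by the indicator vector of $F$, and for $F\subseteq G$, $\varphi_{FG}:M_F\to M_G$ is multiplication by $\prod_{i\in G\setminus F}x_i$. A simplicial graph on $[n]$ is a $1$-dimensional simplicial complex $\Delta$ with vertex set $[n]$; $I_\Delta$ is generated by $\prod_{i\in\sigma}x_i$ for $\sigma\notin\Delta$. $M$ has support on $\Delta$ if its annihilator is $I_\Delta$. $M$ is locally of rank $1$ if $\dim_k M_F=1$ for every edge $F$. The multi-degree is $\mathbf{d}$ with $d_i=\dim_k M_{\{i\}}-1$. The genus is $\dim_k\widetilde H_1(\Delta;k)$. 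*)

theory Defs
  imports Complex_Main "HOL-Library.Function_Algebras"
begin

definition edges :: "nat set set \<Rightarrow> nat set set" where
  "edges \<Delta> = {F \<in> \<Delta>. card F = 2}"

definition simplicial_graph :: "nat \<Rightarrow> nat set set \<Rightarrow> bool" where
  "simplicial_graph n \<Delta> \<longleftrightarrow>
     (\<forall>F\<in>\<Delta>. F \<subseteq> {1..n}) \<and>
     (\<forall>v\<in>{1..n}. {v} \<in> \<Delta>) \<and>
     (\<forall>F\<in>\<Delta>. \<forall>G. G \<subseteq> F \<longrightarrow> G \<in> \<Delta>) \<and>
     (\<forall>F\<in>\<Delta>. card F \<le> 2) \<and>
     (\<exists>F\<in>\<Delta>. card F = 2)"

definition edge_rel :: "nat set set \<Rightarrow> (nat \<times> nat) set" where
  "edge_rel \<Delta> = {(u, v). {u, v} \<in> edges \<Delta>}"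

definition connected_graph :: "nat \<Rightarrow> nat set set \<Rightarrow> bool" where
  "connected_graph n \<Delta> \<longleftrightarrow> (\<forall>u\<in>{1..n}. \<forall>v\<in>{1..n}. (u, v) \<in> (edge_rel \<Delta>)\<^sup>*)"

text \<open>Simplicial 1-chains with coefficients in k (functions on the edges) and the
  boundary of the oriented edge [i,j] (i<j) being [j]-[i].  Since \<Delta> has no 2-faces,
  the reduced homology H~_1(\<Delta>;k) is the kernel of the boundary map C_1 \<rightarrow> C_0.\<close>
definition bsign :: "nat \<Rightarrow> nat set \<Rightarrow> 'k::field" where
  "bsign v e = (if v = Max e then 1 else - 1)"

definition cycles :: "'k::field itself \<Rightarrow> nat \<Rightarrow> nat set set \<Rightarrow> (nat set \<Rightarrow> 'k) set" where
  "cycles _ n \<Delta> = {c. (\<forall>e. e \<notin> edges \<Delta> \<longrightarrow> c e = 0) \<and>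
      (\<forall>v\<in>{1..n}. (\<Sum>e\<in>{e \<in> edges \<Delta>. v \<in> e}. bsign v e * c e) = 0)}"

definition genus :: "'k::field itself \<Rightarrow> nat \<Rightarrow> nat set set \<Rightarrow> nat" where
  "genus K n \<Delta> = vector_space.dim (\<lambda>(r::'k) (c :: nat set \<Rightarrow> 'k) e. r * c e) (cycles K n \<Delta>)"

definition degs :: "nat \<Rightarrow> (nat \<Rightarrow> int) set" where
  "degs n = {a. \<forall>i. i \<notin> {1..n} \<longrightarrow> a i = 0}"

definition ind :: "nat set \<Rightarrow> nat \<Rightarrow> int" where
  "ind F = (\<lambda>i. if i \<in> F then 1 else 0)"

text \<open>A Z^n-graded S-module is given by its homogeneous components M a (subspaces of an
  ambient k-vector space) and the multiplication maps x_i : M a \<rightarrow> M (a + e_i), which are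
  k-linear and commute; the module is the direct sum of the components.\<close>
definition graded_module ::
  "('k::field \<Rightarrow> 'v::ab_group_add \<Rightarrow> 'v) \<Rightarrow> nat \<Rightarrow> ((nat \<Rightarrow> int) \<Rightarrow> 'v set)
     \<Rightarrow> (nat \<Rightarrow> (nat \<Rightarrow> int) \<Rightarrow> 'v \<Rightarrow> 'v) \<Rightarrow> bool" where
  "graded_module scale n M mult \<longleftrightarrow>
     vector_space scale \<and>
     (\<forall>a\<in>degs n. module.subspace scale (M a)) \<and>
     (\<forall>a\<in>degs n. \<forall>i\<in>{1..n}.
        (\<forall>x\<in>M a. mult i a x \<in> M (a + ind {i})) \<and>
        (\<forall>x\<in>M a. \<forall>y\<in>M a. mult i a (x + y) = mult i a x + mult i a y) \<and>
        (\<forall>x\<in>M a. \<forall>r. mult i a (scale r x) = scale r (mult i a x))) \<and>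
     (\<forall>a\<in>degs n. \<forall>i\<in>{1..n}. \<forall>j\<in>{1..n}. \<forall>x\<in>M a.
        mult i (a + ind {j}) (mult j a x) = mult j (a + ind {i}) (mult i a x))"

fun xpow :: "(nat \<Rightarrow> (nat \<Rightarrow> int) \<Rightarrow> 'v \<Rightarrow> 'v) \<Rightarrow> nat \<Rightarrow> nat \<Rightarrow> (nat \<Rightarrow> int) \<Rightarrow> 'v \<Rightarrow> 'v" where
  "xpow mult i 0 a x = x"
| "xpow mult i (Suc k) a x = mult i (\<lambda>j. a j + int k * ind {i} j) (xpow mult i k a x)"

fun monl :: "(nat \<Rightarrow> (nat \<Rightarrow> int) \<Rightarrow> 'v \<Rightarrow> 'v) \<Rightarrow> nat list \<Rightarrow> (nat \<Rightarrow> nat) \<Rightarrow> (nat \<Rightarrow> int) \<Rightarrow> 'v \<Rightarrow> 'v" where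
  "monl mult [] b a x = x"
| "monl mult (i # is) b a x = monl mult is b (\<lambda>j. a j + int (b i) * ind {i} j) (xpow mult i (b i) a x)"

definition mon :: "(nat \<Rightarrow> (nat \<Rightarrow> int) \<Rightarrow> 'v \<Rightarrow> 'v) \<Rightarrow> nat \<Rightarrow> (nat \<Rightarrow> nat) \<Rightarrow> (nat \<Rightarrow> int) \<Rightarrow> 'v \<Rightarrow> 'v" where
  "mon mult n b a x = monl mult [1..<Suc n] b a x"

definition finitely_generated ::
  "('k::field \<Rightarrow> 'v::ab_group_add \<Rightarrow> 'v) \<Rightarrow> nat \<Rightarrow> ((nat \<Rightarrow> int) \<Rightarrow> 'v set)
     \<Rightarrow> (nat \<Rightarrow> (nat \<Rightarrow> int) \<Rightarrow> 'v \<Rightarrow> 'v) \<Rightarrow> bool" where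
  "finitely_generated scale n M mult \<longleftrightarrow>
     (\<exists>G. finite G \<and> (\<forall>(d, g)\<in>G. d \<in> degs n \<and> g \<in> M d) \<and>
        (\<forall>a\<in>degs n. M a \<subseteq> module.span scale
            {mon mult n (\<lambda>i. nat (a i - d i)) d g | d g. (d, g) \<in> G \<and> d \<le> a}))"

definition square_free ::
  "('k::field \<Rightarrow> 'v::ab_group_add \<Rightarrow> 'v) \<Rightarrow> nat \<Rightarrow> ((nat \<Rightarrow> int) \<Rightarrow> 'v set)
     \<Rightarrow> (nat \<Rightarrow> (nat \<Rightarrow> int) \<Rightarrow> 'v \<Rightarrow> 'v) \<Rightarrow> bool" where
  "square_free scale n M mult \<longleftrightarrow>
     graded_module scale n M mult \<and> finitely_generated scale n M mult \<and>
     (\<forall>a\<in>degs n. (\<exists>i\<in>{1..n}. a i < 0) \<longrightarrow> M a = {0}) \<and>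
     (\<forall>a\<in>degs n. (\<forall>i. 0 \<le> a i) \<longrightarrow> (\<forall>i\<in>{1..n}. 0 < a i \<longrightarrow>
        bij_betw (mult i a) (M a) (M (a + ind {i}))))"

text \<open>Annihilator equals I_\<Delta>.  The annihilator of a Z^n-graded module is a monomial
  ideal, as is I_\<Delta>; x^b \<in> I_\<Delta> iff supp b is not a face.\<close>
definition support_on ::
  "('k::field \<Rightarrow> 'v::ab_group_add \<Rightarrow> 'v) \<Rightarrow> nat \<Rightarrow> ((nat \<Rightarrow> int) \<Rightarrow> 'v set)
     \<Rightarrow> (nat \<Rightarrow> (nat \<Rightarrow> int) \<Rightarrow> 'v \<Rightarrow> 'v) \<Rightarrow> nat set set \<Rightarrow> bool" where
  "support_on scale n M mult \<Delta> \<longleftrightarrow>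
     (\<forall>b :: nat \<Rightarrow> nat. (\<forall>i. i \<notin> {1..n} \<longrightarrow> b i = 0) \<longrightarrow>
        ((\<forall>a\<in>degs n. \<forall>x\<in>M a. mon mult n b a x = 0) \<longleftrightarrow> {i \<in> {1..n}. 0 < b i} \<notin> \<Delta>))"

definition graded_submodule ::
  "('k::field \<Rightarrow> 'v::ab_group_add \<Rightarrow> 'v) \<Rightarrow> nat \<Rightarrow> ((nat \<Rightarrow> int) \<Rightarrow> 'v set)
     \<Rightarrow> (nat \<Rightarrow> (nat \<Rightarrow> int) \<Rightarrow> 'v \<Rightarrow> 'v) \<Rightarrow> ((nat \<Rightarrow> int) \<Rightarrow> 'v set) \<Rightarrow> bool" where
  "graded_submodule scale n M mult N \<longleftrightarrow>
     (\<forall>a\<in>degs n. module.subspace scale (N a) \<and> N a \<subseteq> M a) \<and>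
     (\<forall>a\<in>degs n. \<forall>i\<in>{1..n}. \<forall>x\<in>N a. mult i a x \<in> N (a + ind {i}))"

definition indecomposable ::
  "('k::field \<Rightarrow> 'v::ab_group_add \<Rightarrow> 'v) \<Rightarrow> nat \<Rightarrow> ((nat \<Rightarrow> int) \<Rightarrow> 'v set)
     \<Rightarrow> (nat \<Rightarrow> (nat \<Rightarrow> int) \<Rightarrow> 'v \<Rightarrow> 'v) \<Rightarrow> bool" where
  "indecomposable scale n M mult \<longleftrightarrow>
     (\<exists>a\<in>degs n. M a \<noteq> {0}) \<and>
     \<not> (\<exists>N1 N2. graded_submodule scale n M mult N1 \<and> graded_submodule scale n M mult N2 \<and>
          (\<exists>a\<in>degs n. N1 a \<noteq> {0}) \<and> (\<exists>a\<in>degs n. N2 a \<noteq> {0}) \<and>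
          (\<forall>a\<in>degs n. N1 a \<inter> N2 a = {0} \<and> M a = {x + y | x y. x \<in> N1 a \<and> y \<in> N2 a}))"

text \<open>M_F = M (ind F); \<phi>_FG = multiplication by the product of x_i, i \<in> G - F.\<close>
definition phi :: "(nat \<Rightarrow> (nat \<Rightarrow> int) \<Rightarrow> 'v \<Rightarrow> 'v) \<Rightarrow> nat \<Rightarrow> nat set \<Rightarrow> nat set \<Rightarrow> 'v \<Rightarrow> 'v" where
  "phi mult n F G x = mon mult n (\<lambda>i. if i \<in> G - F then 1 else 0) (ind F) x"

end

theory Submission
  imports Defs
begin


lemma vs_fun: "vector_space (\<lambda>(r::'k::field) (c :: 'a \<Rightarrow> 'k) e. r * c e)"
  by unfold_locales (auto simp: fun_eq_iff algebra_simps)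

lemma sum_fun_apply: "(\<Sum>x\<in>S. (f x :: 'a \<Rightarrow> 'b::comm_monoid_add)) y = (\<Sum>x\<in>S. f x y)"
  by (induction S rule: infinite_finite_induct) auto

lemma dim_one_basis:
  assumes vs: "vector_space scale" and sub: "module.subspace scale V" and d: "vector_space.dim scale V = 1"
  shows "\<exists>b\<in>V. b \<noteq> 0 \<and> V = range (\<lambda>r. scale r b)"
proof -
  interpret vector_space scale by (rule vs)
  obtain B where B: "B \<subseteq> V" "independent B" "V \<subseteq> span B" "card B = dim V"
    using basis_exists by blast
  then obtain b where Bb: "B = {b}" using d by (auto simp: card_Suc_eq)
  have "b \<noteq> 0" using B(2) Bb dependent_zero by blast
  moreover have "V = range (\<lambda>r. scale r b)"
  proof
    show "V \<subseteq> range (\<lambda>r. scale r b)" using B(3) Bb span_singleton by auto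
    show "range (\<lambda>r. scale r b) \<subseteq> V" using B(1) Bb sub subspace_scale by auto
  qed
  moreover have "b \<in> V" using B(1) Bb by auto
  ultimately show ?thesis by blast
qed



lemma ind_apply: "ind F i = (if i \<in> F then 1 else 0)" by (simp add: ind_def)

lemma degs_add: "a \<in> degs n \<Longrightarrow> i \<in> {1..n} \<Longrightarrow> a + ind {i} \<in> degs n"
  by (auto simp: degs_def ind_def)

lemma ind_degs: "F \<subseteq> {1..n} \<Longrightarrow> ind F \<in> degs n"
  by (auto simp: degs_def ind_def)

lemma zero_degs: "0 \<in> degs n" by (simp add: degs_def)

locale SF =
  fixes scale :: "'k::field \<Rightarrow> 'v::ab_group_add \<Rightarrow> 'v" and n :: nat
    and M :: "(nat \<Rightarrow> int) \<Rightarrow> 'v set" and mult :: "nat \<Rightarrow> (nat \<Rightarrow> int) \<Rightarrow> 'v \<Rightarrow> 'v"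
  assumes sf: "square_free scale n M mult"
begin

lemma gm: "graded_module scale n M mult" using sf by (simp add: square_free_def)

lemma vs: "vector_space scale" using gm by (simp add: graded_module_def)

lemma sub: "a \<in> degs n \<Longrightarrow> module.subspace scale (M a)"
  using gm by (simp add: graded_module_def)

lemma zero_in: "a \<in> degs n \<Longrightarrow> 0 \<in> M a"
proof -
  assume a: "a \<in> degs n"
  interpret vector_space scale by (rule vs)
  show ?thesis using sub[OF a] by (rule subspace_0)
qed

lemma gm3: "\<forall>a\<in>degs n. \<forall>i\<in>{1..n}.
        (\<forall>x\<in>M a. mult i a x \<in> M (a + ind {i})) \<and>
        (\<forall>x\<in>M a. \<forall>y\<in>M a. mult i a (x + y) = mult i a x + mult i a y) \<and>
        (\<forall>x\<in>M a. \<forall>r. mult i a (scale r x) = scale r (mult i a x))"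
  using gm unfolding graded_module_def by (elim conjE)

lemma closed: "a \<in> degs n \<Longrightarrow> i \<in> {1..n} \<Longrightarrow> x \<in> M a \<Longrightarrow> mult i a x \<in> M (a + ind {i})"
  using gm3 by simp

lemma madd: "a \<in> degs n \<Longrightarrow> i \<in> {1..n} \<Longrightarrow> x \<in> M a \<Longrightarrow> y \<in> M a \<Longrightarrow> mult i a (x + y) = mult i a x + mult i a y"
  using gm3 by simp

lemma mscale: "a \<in> degs n \<Longrightarrow> i \<in> {1..n} \<Longrightarrow> x \<in> M a \<Longrightarrow> mult i a (scale r x) = scale r (mult i a x)"
  using gm3 by simp

lemma mzero: "a \<in> degs n \<Longrightarrow> i \<in> {1..n} \<Longrightarrow> mult i a 0 = 0"
  using madd[of a i 0 0] zero_in[of a] by simp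

lemma comm: "a \<in> degs n \<Longrightarrow> i \<in> {1..n} \<Longrightarrow> j \<in> {1..n} \<Longrightarrow> x \<in> M a \<Longrightarrow>
   mult i (a + ind {j}) (mult j a x) = mult j (a + ind {i}) (mult i a x)"
proof -
  have "\<forall>a\<in>degs n. \<forall>i\<in>{1..n}. \<forall>j\<in>{1..n}. \<forall>x\<in>M a.
        mult i (a + ind {j}) (mult j a x) = mult j (a + ind {i}) (mult i a x)"
    using gm unfolding graded_module_def by (elim conjE)
  then show "a \<in> degs n \<Longrightarrow> i \<in> {1..n} \<Longrightarrow> j \<in> {1..n} \<Longrightarrow> x \<in> M a \<Longrightarrow> ?thesis" by blast
qed

lemma sf3: "\<forall>a\<in>degs n. (\<exists>i\<in>{1..n}. a i < 0) \<longrightarrow> M a = {0}"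
  using sf unfolding square_free_def by (elim conjE)

lemma sf4: "\<forall>a\<in>degs n. (\<forall>i. 0 \<le> a i) \<longrightarrow> (\<forall>i\<in>{1..n}. 0 < a i \<longrightarrow>
        bij_betw (mult i a) (M a) (M (a + ind {i})))"
  using sf unfolding square_free_def by (elim conjE)

lemma neg_zero: "a \<in> degs n \<Longrightarrow> i \<in> {1..n} \<Longrightarrow> a i < 0 \<Longrightarrow> M a = {0}"
  using sf3 by blast

lemma bij: "a \<in> degs n \<Longrightarrow> \<forall>j. 0 \<le> a j \<Longrightarrow> i \<in> {1..n} \<Longrightarrow> 0 < a i \<Longrightarrow>
   bij_betw (mult i a) (M a) (M (a + ind {i}))"
  using sf4 by blast

lemma notnonneg_zero: "a \<in> degs n \<Longrightarrow> \<not> (\<forall>j. 0 \<le> a j) \<Longrightarrow> M a = {0}"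
proof -
  assume a: "a \<in> degs n" "\<not> (\<forall>j. 0 \<le> a j)"
  then obtain j where "a j < 0" by (auto simp: not_le)
  moreover then have "j \<in> {1..n}" using a(1) by (auto simp: degs_def)
  ultimately show ?thesis using neg_zero a(1) by blast
qed

end

lemma monl_id: "\<forall>i\<in>set is. b i = 0 \<Longrightarrow> monl mult is b a x = x"
  by (induction "is" arbitrary: a) auto

lemma monl_single:
  "distinct is \<Longrightarrow> \<forall>i\<in>set is. i \<noteq> w \<longrightarrow> b i = 0 \<Longrightarrow> b w = 1 \<Longrightarrow>
   monl mult is b a x = (if w \<in> set is then mult w a x else x)"
proof (induction "is" arbitrary: a x)
  case Nil then show ?case by simp
next
  case (Cons i "is")
  show ?case
  proof (cases "i = w")
    case True
    have bi: "b i = Suc 0" using True Cons.prems(3) by simp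
    have e: "(\<lambda>j. a j + int (Suc 0) * ind {i} j) = a + ind {w}"
      using True by (simp add: fun_eq_iff)
    have e0: "(\<lambda>j. a j + int 0 * ind {i} j) = a" by simp
    have x: "xpow mult i (b i) a x = mult w a x"
      by (simp only: bi xpow.simps e0, simp only: True)
    have "monl mult (i # is) b a x = monl mult is b (a + ind {w}) (mult w a x)"
      by (simp only: monl.simps x, simp only: bi e)
    also have "\<dots> = mult w a x"
    proof (rule monl_id)
      show "\<forall>i\<in>set is. b i = 0" using Cons.prems(1,2) True by auto
    qed
    finally show ?thesis using True by (simp only: list.set_intros if_True)
  next
    case False
    have bi: "b i = 0" using Cons.prems False by simp
    have e: "(\<lambda>j. a j + int 0 * ind {i} j) = a"
      by simp
    have "monl mult (i # is) b a x = monl mult is b a x"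
      by (simp only: monl.simps bi xpow.simps e)
    have d: "distinct is" using Cons.prems(1) by simp
    have z: "\<forall>i\<in>set is. i \<noteq> w \<longrightarrow> b i = 0" using Cons.prems(2) by simp
    note \<open>monl mult (i # is) b a x = monl mult is b a x\<close>
    moreover have "monl mult is b a x = (if w \<in> set is then mult w a x else x)"
      by (rule Cons.IH[OF d z Cons.prems(3)])
    moreover have "(w \<in> set (i # is)) = (w \<in> set is)" using False by auto
    ultimately show ?thesis by (simp only:)
  qed
qed

lemma phi_edge:
  assumes "v \<noteq> w" "w \<in> {1..n}"
  shows "phi mult n {v} {v, w} x = mult w (ind {v}) x"
proof -
  let ?b = "(\<lambda>i. if i \<in> {v,w} - {v} then 1 else 0) :: nat \<Rightarrow> nat"
  have b1: "\<forall>i\<in>set [1..<Suc n]. i \<noteq> w \<longrightarrow> ?b i = 0" by auto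
  have b2: "?b w = 1" using assms by auto
  have w: "w \<in> set [1..<Suc n]" using assms by auto
  have "phi mult n {v} {v, w} x = monl mult [1..<Suc n] ?b (ind {v}) x"
    by (simp add: phi_def mon_def)
  also have "\<dots> = mult w (ind {v}) x"
    using monl_single[OF distinct_upt b1 b2, of mult "ind {v}" x] by (simp only: if_P[OF w])
  finally show ?thesis .
qed



context SF begin

lemma monl_inj:
  "set is \<subseteq> {1..n} \<Longrightarrow> a \<in> degs n \<Longrightarrow> \<forall>j. 0 \<le> a j \<Longrightarrow> \<forall>i. b i \<le> 1 \<Longrightarrow>
   \<forall>i\<in>set is. b i = 1 \<longrightarrow> 0 < a i \<Longrightarrow> x \<in> M a \<Longrightarrow> monl mult is b a x = 0 \<Longrightarrow> x = 0"
proof (induction "is" arbitrary: a x)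
  case Nil then show ?case by simp
next
  case (Cons i "is")
  have i: "i \<in> {1..n}" using Cons.prems(1) by simp
  have e0: "(\<lambda>j. a j + int 0 * ind {i} j) = a" by simp
  show ?case
  proof (cases "b i = 0")
    case True
    have "monl mult (i # is) b a x = monl mult is b a x"
      by (simp only: monl.simps True xpow.simps e0)
    then show ?thesis using Cons.IH[of a x] Cons.prems by simp
  next
    case False
    then have bi: "b i = Suc 0" using Cons.prems(4) using Cons.prems(4)[rule_format, of i] by linarith
    have e: "(\<lambda>j. a j + int (Suc 0) * ind {i} j) = a + ind {i}"
      by (simp add: fun_eq_iff)
    have "monl mult (i # is) b a x = monl mult is b (a + ind {i}) (mult i a x)"
      by (simp only: monl.simps bi xpow.simps e0 e)
    then have m0: "monl mult is b (a + ind {i}) (mult i a x) = 0" using Cons.prems(7) by simp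
    have a': "a + ind {i} \<in> degs n" using degs_add[OF Cons.prems(2) i] .
    have nn: "\<forall>j. 0 \<le> (a + ind {i}) j" using Cons.prems(3) by (simp add: ind_def)
    have pos: "\<forall>j\<in>set is. b j = 1 \<longrightarrow> 0 < (a + ind {i}) j"
      using Cons.prems(5) by (auto simp: ind_def)
    have y: "mult i a x \<in> M (a + ind {i})" using closed[OF Cons.prems(2) i Cons.prems(6)] .
    have "mult i a x = 0"
      using Cons.IH[OF _ a' nn Cons.prems(4) pos y m0] Cons.prems(1) by simp
    moreover have "0 < a i" using Cons.prems(5) bi by simp
    then have "inj_on (mult i a) (M a)"
      using bij[OF Cons.prems(2,3) i] bij_betw_def by blast
    moreover have "mult i a 0 = 0" using mzero[OF Cons.prems(2) i] .
    ultimately have "mult i a x = mult i a 0" "inj_on (mult i a) (M a)" by simp_all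
    then show ?thesis using zero_in[OF Cons.prems(2)] Cons.prems(6)
      by (meson inj_onD)
  qed
qed

lemma nonface_zero:
  assumes supp: "support_on scale n M mult \<Delta>" and a: "a \<in> degs n" and nn: "\<forall>j. 0 \<le> a j"
    and nf: "{j. a j \<noteq> 0} \<notin> \<Delta>"
  shows "M a = {0}"
proof -
  define b where "b = (\<lambda>i. if 0 < a i then 1 else 0 :: nat)"
  have b0: "\<forall>i. i \<notin> {1..n} \<longrightarrow> b i = 0" using a by (auto simp: b_def degs_def)
  have E: "{i \<in> {1..n}. 0 < b i} = {j. a j \<noteq> 0}"
  proof (intro set_eqI iffI)
    fix j assume "j \<in> {i \<in> {1..n}. 0 < b i}"
    then have "0 < a j" by (simp add: b_def split: if_splits)
    then show "j \<in> {j. a j \<noteq> 0}" by simp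
  next
    fix j assume "j \<in> {j. a j \<noteq> 0}"
    then have "a j \<noteq> 0" by simp
    moreover have "0 \<le> a j" using nn by blast
    ultimately have "0 < a j" by linarith
    moreover have "j \<in> {1..n}" using a \<open>a j \<noteq> 0\<close> by (auto simp: degs_def)
    ultimately show "j \<in> {i \<in> {1..n}. 0 < b i}" by (simp add: b_def)
  qed
  have Imp: "(\<forall>i. i \<notin> {1..n} \<longrightarrow> b i = 0) \<longrightarrow>
        ((\<forall>a\<in>degs n. \<forall>x\<in>M a. mon mult n b a x = 0) \<longleftrightarrow> {i \<in> {1..n}. 0 < b i} \<notin> \<Delta>)"
    using supp unfolding support_on_def by (rule spec)
  have nf': "{i \<in> {1..n}. 0 < b i} \<notin> \<Delta>" unfolding E by (rule nf)
  have "\<forall>a\<in>degs n. \<forall>x\<in>M a. mon mult n b a x = 0"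
    using Imp b0 nf' by blast
  then have z: "\<forall>x\<in>M a. monl mult [1..<Suc n] b a x = 0" using a unfolding mon_def by blast
  have "\<forall>x\<in>M a. x = 0"
  proof
    fix x assume x: "x \<in> M a"
    have s1: "set [1..<Suc n] \<subseteq> {1..n}" by auto
    have s2: "\<forall>i. b i \<le> 1" by (simp add: b_def)
    have s3: "\<forall>i\<in>set [1..<Suc n]. b i = 1 \<longrightarrow> 0 < a i" by (simp add: b_def)
    show "x = 0"
      by (rule monl_inj[OF s1 a nn s2 s3 x]) (use z x in blast)
  qed
  then show ?thesis using zero_in[OF a] by blast
qed

lemma transport:
  "a \<in> degs n \<Longrightarrow> \<forall>j. 0 \<le> a j \<Longrightarrow> i \<in> {1..n} \<Longrightarrow> a i = 0 \<Longrightarrow>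
   \<forall>y\<in>M (ind {j. a j \<noteq> 0}). mult i (ind {j. a j \<noteq> 0}) y = 0 \<Longrightarrow> x \<in> M a \<Longrightarrow> mult i a x = 0"
proof (induction "\<Sum>j\<in>{1..n}. nat (a j)" arbitrary: a x rule: less_induct)
  case less
  show ?case
  proof (cases "\<forall>j. a j \<le> 1")
    case True
    have h: "a k = 0 \<or> a k = 1" for k
    proof -
      have "0 \<le> a k" "a k \<le> 1" using True less.prems(2) by auto
      then show ?thesis by presburger
    qed
    define S where "S = {j. a j \<noteq> 0}"
    have aS: "a = ind S"
      using h by (auto simp: fun_eq_iff ind_def S_def)
    have p5: "\<forall>y\<in>M (ind S). mult i (ind S) y = 0" using less.prems(5) by (simp only: S_def)
    show ?thesis using p5 less.prems(6) by (simp only: aS)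
  next
    case False
    then obtain j where j: "a j > 1" by (auto simp: not_le)
    then have jn: "j \<in> {1..n}" using less.prems(1) by (auto simp: degs_def)
    define a' where "a' = a - ind {j}"
    have a'd: "a' \<in> degs n" using less.prems(1) jn by (auto simp: a'_def degs_def ind_def)
    have a'nn: "\<forall>k. 0 \<le> a' k" using less.prems(2) j by (auto simp: a'_def ind_def)
    have supp: "{k. a' k \<noteq> 0} = {k. a k \<noteq> 0}" using j by (auto simp: a'_def ind_def)
    have a'i: "a' i = 0" using less.prems(4) j by (auto simp: a'_def ind_def)
    have aa: "a' + ind {j} = a" by (simp add: a'_def)
    have lt: "(\<Sum>k\<in>{1..n}. nat (a' k)) < (\<Sum>k\<in>{1..n}. nat (a k))"
    proof (rule sum_strict_mono_ex1)
      show "\<forall>x\<in>{1..n}. nat (a' x) \<le> nat (a x)" by (auto simp: a'_def ind_def)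
      show "\<exists>x\<in>{1..n}. nat (a' x) < nat (a x)" using jn j by (auto simp: a'_def ind_def intro!: bexI[of _ j])
    qed simp
    have a'j: "0 < a' j" using j by (simp add: a'_def ind_def)
    have "bij_betw (mult j a') (M a') (M a)" using bij[OF a'd a'nn jn a'j] aa by simp
    then have "mult j a' ` M a' = M a" by (rule bij_betw_imp_surj_on)
    then obtain y where y: "y \<in> M a'" "x = mult j a' y"
      using less.prems(6) by blast
    have iy: "mult i a' y = 0"
      using less.hyps[OF lt a'd a'nn less.prems(3) a'i _ y(1)] less.prems(5) supp by simp
    have "mult i a x = mult i (a' + ind {j}) (mult j a' y)" using y aa by simp
    also have "\<dots> = mult j (a' + ind {i}) (mult i a' y)"
      using comm[OF a'd less.prems(3) jn y(1)] .
    also have "\<dots> = 0" using iy mzero[OF degs_add[OF a'd less.prems(3)] jn] by simp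
    finally show ?thesis .
  qed
qed

end


lemma edges_sub: "simplicial_graph n \<Delta> \<Longrightarrow> e \<in> edges \<Delta> \<Longrightarrow> e \<subseteq> {1..n}"
  by (auto simp: simplicial_graph_def edges_def)

lemma edges_fin: "simplicial_graph n \<Delta> \<Longrightarrow> finite (edges \<Delta>)"
proof -
  assume "simplicial_graph n \<Delta>"
  then have "edges \<Delta> \<subseteq> Pow {1..n}" using edges_sub by blast
  then show ?thesis by (rule finite_subset) simp
qed

lemma edge_card: "e \<in> edges \<Delta> \<Longrightarrow> card e = 2" by (simp add: edges_def)

lemma edge_other: "e \<in> edges \<Delta> \<Longrightarrow> l \<in> e \<Longrightarrow> \<exists>p. p \<noteq> l \<and> e = {l, p}"
proof -
  assume e: "e \<in> edges \<Delta>" and l: "l \<in> e"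
  have "card e = 2" using e by (rule edge_card)
  then obtain x y where xy: "x \<noteq> y" "e = {x, y}" by (auto simp: card_2_iff)
  then show ?thesis using l by auto
qed

lemma edge_lt: "e \<in> edges \<Delta> \<Longrightarrow> \<exists>p q. p < q \<and> e = {p, q}"
proof -
  assume e: "e \<in> edges \<Delta>"
  then have "card e = 2" by (rule edge_card)
  then obtain x y where xy: "x \<noteq> y" "e = {x, y}" by (auto simp: card_2_iff)
  show ?thesis
  proof (cases "x < y")
    case True then show ?thesis using xy by blast
  next
    case False then have "y < x" using xy(1) by simp
    then show ?thesis using xy by (intro exI[of _ y] exI[of _ x]) auto
  qed
qed

lemma genus_pos:
  assumes sg: "simplicial_graph n \<Delta>" and c: "c \<in> cycles TYPE('k::field) n \<Delta>" and cn: "c \<noteq> 0"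
  shows "genus TYPE('k) n \<Delta> \<noteq> 0"
proof
  assume g0: "genus TYPE('k) n \<Delta> = 0"
  interpret V: vector_space "\<lambda>(r::'k) (c :: nat set \<Rightarrow> 'k) e. r * c e" by (rule vs_fun)
  define \<delta> where "\<delta> = (\<lambda>e::nat set. (\<lambda>x. if x = e then (1::'k) else 0))"
  have fin: "finite (edges \<Delta>)" using edges_fin[OF sg] .
  have sp: "cycles TYPE('k) n \<Delta> \<subseteq> V.span (\<delta> ` edges \<Delta>)"
  proof
    fix d assume d: "d \<in> cycles TYPE('k) n \<Delta>"
    have d0: "\<forall>e. e \<notin> edges \<Delta> \<longrightarrow> d e = 0" using d by (simp add: cycles_def)
    have "d = (\<Sum>e\<in>edges \<Delta>. (\<lambda>x. d e * \<delta> e x))"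
    proof
      fix x
      have "(\<Sum>e\<in>edges \<Delta>. (\<lambda>x. d e * \<delta> e x)) x = (\<Sum>e\<in>edges \<Delta>. d e * \<delta> e x)"
        by (rule sum_fun_apply)
      also have "\<dots> = (\<Sum>e\<in>edges \<Delta>. if x = e then d e else 0)"
        by (rule sum.cong) (auto simp: \<delta>_def)
      also have "\<dots> = (if x \<in> edges \<Delta> then d x else 0)"
        using fin by (simp add: sum.delta)
      also have "\<dots> = d x" using d0 by auto
      finally show "d x = (\<Sum>e\<in>edges \<Delta>. (\<lambda>x. d e * \<delta> e x)) x" by simp
    qed
    also have "\<dots> \<in> V.span (\<delta> ` edges \<Delta>)"
    proof (rule V.span_sum)
      fix e assume "e \<in> edges \<Delta>"
      then have "\<delta> e \<in> V.span (\<delta> ` edges \<Delta>)" by (intro V.span_base) simp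
      then show "(\<lambda>x. d e * \<delta> e x) \<in> V.span (\<delta> ` edges \<Delta>)" by (rule V.span_scale)
    qed
    finally show "d \<in> V.span (\<delta> ` edges \<Delta>)" .
  qed
  obtain B where B: "B \<subseteq> cycles TYPE('k) n \<Delta>" "V.independent B"
    "cycles TYPE('k) n \<Delta> \<subseteq> V.span B" "card B = V.dim (cycles TYPE('k) n \<Delta>)"
    using V.basis_exists by blast
  have "finite B"
    using V.independent_span_bound[OF finite_imageI[OF fin] B(2)] B(1) sp by blast
  moreover have "card B = 0" using B(4) g0 by (simp add: genus_def)
  ultimately have "B = {}" by simp
  then have "c \<in> V.span {}" using B(3) c by blast
  then show False using cn by simp
qed



lemma leaf:
  assumes sg: "simplicial_graph n \<Delta>" and g0: "genus TYPE('k::field) n \<Delta> = 0"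
    and E: "E \<subseteq> edges \<Delta>" and En: "E \<noteq> {}"
  shows "\<exists>f\<in>E. \<exists>l\<in>f. \<forall>h\<in>E. l \<in> h \<longrightarrow> h = f"
proof (rule ccontr)
  assume nl: "\<not> ?thesis"
  have finE: "finite E" using finite_subset[OF E edges_fin[OF sg]] .
  define V0 where "V0 = \<Union>E"
  have V0sub: "V0 \<subseteq> {1..n}" using E edges_sub[OF sg] by (auto simp: V0_def)
  have finV: "finite V0" using finite_subset[OF V0sub] by simp
  have deg: "2 \<le> card {h\<in>E. u \<in> h}" if u: "u \<in> V0" for u
  proof -
    obtain f where f: "f \<in> E" "u \<in> f" using u by (auto simp: V0_def)
    obtain h where h: "h \<in> E" "u \<in> h" "h \<noteq> f" using nl f by blast
    have "{f, h} \<subseteq> {h\<in>E. u \<in> h}" using f h by auto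
    moreover have "card {f, h} = 2" using h(3) by simp
    moreover have "finite {h\<in>E. u \<in> h}" using finE by simp
    ultimately show ?thesis using card_mono[of "{h\<in>E. u \<in> h}" "{f, h}"] by simp
  qed
  have count: "(\<Sum>u\<in>V0. card {h\<in>E. u \<in> h}) = (\<Sum>h\<in>E. card h)"
  proof -
    have "(\<Sum>u\<in>V0. card {h\<in>E. u \<in> h}) = (\<Sum>u\<in>V0. \<Sum>h\<in>{h\<in>E. u \<in> h}. (1::nat))"
      by simp
    also have "\<dots> = (\<Sum>h\<in>E. \<Sum>u\<in>{u\<in>V0. u \<in> h}. (1::nat))"
      by (rule sum.swap_restrict[OF finV finE])
    also have "\<dots> = (\<Sum>h\<in>E. card h)"
    proof (rule sum.cong[OF refl])
      fix h assume "h \<in> E"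
      then have "{u\<in>V0. u \<in> h} = h" by (auto simp: V0_def)
      then show "(\<Sum>u\<in>{u\<in>V0. u \<in> h}. (1::nat)) = card h" by simp
    qed
    finally show ?thesis .
  qed
  have "(\<Sum>h\<in>E. card h) = (\<Sum>h\<in>E. 2)"
    using E by (intro sum.cong) (auto simp: edges_def)
  then have "(\<Sum>u\<in>V0. (2::nat)) \<le> (\<Sum>h\<in>E. (2::nat))"
    using count deg sum_mono[of V0 "\<lambda>u. 2" "\<lambda>u. card {h\<in>E. u \<in> h}"] by simp
  then have VE: "card V0 \<le> card E" by simp
  obtain f0 where f0: "f0 \<in> E" using En by blast
  have "card f0 = 2" using f0 E by (intro edge_card) blast
  then have "f0 \<noteq> {}" by auto
  then obtain u0 where u0: "u0 \<in> f0" by blast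
  have u0V: "u0 \<in> V0" using f0 u0 by (auto simp: V0_def)
  interpret W: vector_space "\<lambda>(r::'k) (c :: nat \<Rightarrow> 'k) x. r * c x" by (rule vs_fun)
  define dv where "dv = (\<lambda>u::nat. (\<lambda>x::nat. if x = u then (1::'k) else 0))"
  define Ws where "Ws = (\<lambda>u. dv u - dv u0) ` (V0 - {u0})"
  have finW: "finite Ws" using finV by (simp add: Ws_def)
  have cardW: "card Ws < card E"
  proof -
    have "card Ws \<le> card (V0 - {u0})" unfolding Ws_def by (rule card_image_le) (use finV in simp)
    also have "\<dots> = card V0 - 1" using u0V finV by simp
    also have "\<dots> < card E"
    proof -
      have "0 < card V0" using finV u0V card_gt_0_iff by blast
      then show ?thesis using VE by linarith
    qed
    finally show ?thesis .
  qed
  define beta where "beta = (\<lambda>h::nat set. (\<lambda>u. if u \<in> h then (bsign u h :: 'k) else 0))"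
  have dvW: "dv x - dv u0 \<in> W.span Ws" if "x \<in> V0" for x
  proof (cases "x = u0")
    case True then show ?thesis using W.span_zero by simp
  next
    case False then show ?thesis using that by (intro W.span_base) (auto simp: Ws_def)
  qed
  have bspan: "beta h \<in> W.span Ws" if h: "h \<in> E" for h
  proof -
    obtain p q where pq: "p < q" "h = {p, q}" using edge_lt[of h \<Delta>] h E by blast
    have mx: "Max h = q" using pq by (auto simp: Max_insert)
    have "beta h = dv q - dv p"
    proof
      fix x show "beta h x = (dv q - dv p) x"
        using pq mx by (auto simp: beta_def dv_def bsign_def)
    qed
    also have "\<dots> = (dv q - dv u0) - (dv p - dv u0)" by simp
    also have "\<dots> \<in> W.span Ws"
      using pq h by (intro W.span_diff dvW) (auto simp: V0_def)
    finally show ?thesis .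
  qed
  have bsign_nz: "(bsign u h :: 'k) \<noteq> 0" for u h by (simp add: bsign_def)
  have binj: "inj_on beta E"
  proof
    fix h1 h2 assume "h1 \<in> E" "h2 \<in> E" "beta h1 = beta h2"
    have "(u \<in> h1) = (u \<in> h2)" for u
    proof -
      have "beta h1 u = beta h2 u" using \<open>beta h1 = beta h2\<close> by simp
      then show ?thesis using bsign_nz[of u h1] bsign_nz[of u h2]
        unfolding beta_def by (auto split: if_splits)
    qed
    then show "h1 = h2" by blast
  qed
  have dep: "W.dependent (beta ` E)"
  proof (rule ccontr)
    assume ind: "\<not> W.dependent (beta ` E)"
    have "beta ` E \<subseteq> W.span Ws" using bspan by blast
    then have "card (beta ` E) \<le> card Ws" using W.independent_span_bound[OF finW ind] by blast
    moreover have "card (beta ` E) = card E" using card_image[OF binj] .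
    ultimately show False using cardW by simp
  qed
  then obtain uu where uu: "\<exists>v\<in>beta ` E. uu v \<noteq> 0" "(\<Sum>v\<in>beta ` E. (\<lambda>x. uu v * v x)) = 0"
    using W.dependent_finite[OF finite_imageI[OF finE]] by blast
  define c where "c = (\<lambda>h. if h \<in> E then uu (beta h) else (0::'k))"
  have cn: "c \<noteq> 0"
  proof
    assume "c = 0"
    obtain h where "h \<in> E" "uu (beta h) \<noteq> 0" using uu(1) by blast
    then have "c h \<noteq> 0" by (simp add: c_def)
    then show False using \<open>c = 0\<close> by simp
  qed
  have cc: "c \<in> cycles TYPE('k) n \<Delta>"
    unfolding cycles_def
  proof (intro CollectI conjI allI impI ballI)
    fix e assume "e \<notin> edges \<Delta>" then show "c e = 0" using E by (auto simp: c_def)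
  next
    fix v assume v: "v \<in> {1..n}"
    have "(\<Sum>e\<in>{e \<in> edges \<Delta>. v \<in> e}. bsign v e * c e) =
          (\<Sum>e\<in>edges \<Delta>. if v \<in> e then bsign v e * c e else 0)"
      by (rule sum.inter_filter[OF edges_fin[OF sg]])
    also have "\<dots> = (\<Sum>e\<in>edges \<Delta>. c e * beta e v)"
      by (rule sum.cong) (auto simp: beta_def)
    also have "\<dots> = (\<Sum>e\<in>E. c e * beta e v)"
      using E edges_fin[OF sg] by (intro sum.mono_neutral_right) (auto simp: c_def)
    also have "\<dots> = (\<Sum>e\<in>E. uu (beta e) * beta e v)"
      by (rule sum.cong) (auto simp: c_def)
    also have "\<dots> = (\<Sum>w\<in>beta ` E. uu w * w v)"
      using sum.reindex[OF binj, of "\<lambda>w. uu w * w v"] by simp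
    also have "\<dots> = (\<Sum>w\<in>beta ` E. (\<lambda>x. uu w * w x)) v"
      by (rule sum_fun_apply[symmetric])
    also have "\<dots> = 0" using uu(2) by simp
    finally show "(\<Sum>e\<in>{e \<in> edges \<Delta>. v \<in> e}. bsign v e * c e) = 0" .
  qed
  show False using genus_pos[OF sg cc cn] g0 by simp
qed



lemma cut_aux:
  assumes sg: "simplicial_graph n \<Delta>" and g0: "genus TYPE('k::field) n \<Delta> = 0"
  shows "finite E \<Longrightarrow> E \<subseteq> edges \<Delta> \<Longrightarrow> e \<in> E \<Longrightarrow> v \<noteq> w \<Longrightarrow> e = {v, w} \<Longrightarrow>
    \<exists>A. v \<in> A \<and> w \<notin> A \<and> (\<forall>g\<in>E. g \<noteq> e \<longrightarrow> g \<subseteq> A \<or> g \<inter> A = {})"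
proof (induction E arbitrary: e v w rule: finite_psubset_induct)
  case (psubset E)
  have En: "E \<noteq> {}" using psubset.prems(2) by blast
  obtain f l where f: "f \<in> E" "l \<in> f" and uq: "\<forall>h\<in>E. l \<in> h \<longrightarrow> h = f"
    using leaf[OF sg g0 psubset.prems(1) En] by blast
  obtain p where p: "p \<noteq> l" "f = {l, p}" using edge_other[of f \<Delta> l] f psubset.prems(1) by blast
  show ?case
  proof (cases "f = e")
    case True
    then have "l = v \<or> l = w" using f psubset.prems(4) by blast
    then show ?thesis
    proof
      assume lv: "l = v"
      show ?thesis
      proof (intro exI[of _ "{v}"] conjI ballI impI)
        show "v \<in> {v}" by simp
        show "w \<notin> {v}" using psubset.prems(3) by simp
        fix g assume "g \<in> E" "g \<noteq> e"
        then have "v \<notin> g" using uq lv True by blast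
        then show "g \<subseteq> {v} \<or> g \<inter> {v} = {}" by blast
      qed
    next
      assume lw: "l = w"
      show ?thesis
      proof (intro exI[of _ "- {w}"] conjI ballI impI)
        show "v \<in> - {w}" using psubset.prems(3) by simp
        show "w \<notin> - {w}" by simp
        fix g assume "g \<in> E" "g \<noteq> e"
        then have "w \<notin> g" using uq lw True by blast
        then show "g \<subseteq> - {w} \<or> g \<inter> - {w} = {}" by blast
      qed
    qed
  next
    case False
    have sub: "E - {f} \<subset> E" using f by blast
    have sub2: "E - {f} \<subseteq> edges \<Delta>" using psubset.prems(1) by blast
    have eE: "e \<in> E - {f}" using psubset.prems(2) False by blast
    obtain A where A: "v \<in> A" "w \<notin> A" "\<forall>g\<in>E - {f}. g \<noteq> e \<longrightarrow> g \<subseteq> A \<or> g \<inter> A = {}"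
      using psubset.IH[OF sub sub2 eE psubset.prems(3,4)] by blast
    have le: "l \<notin> e" using uq psubset.prems(2) False by blast
    then have lv: "l \<noteq> v" "l \<noteq> w" using psubset.prems(4) by auto
    define A' where "A' = (if p \<in> A then insert l A else A - {l})"
    show ?thesis
    proof (intro exI[of _ A'] conjI ballI impI)
      show "v \<in> A'" using A(1) lv by (simp add: A'_def)
      show "w \<notin> A'" using A(2) lv by (simp add: A'_def)
      fix g assume g: "g \<in> E" "g \<noteq> e"
      show "g \<subseteq> A' \<or> g \<inter> A' = {}"
      proof (cases "g = f")
        case True then show ?thesis using p by (auto simp: A'_def)
      next
        case gf: False
        then have lg: "l \<notin> g" using uq g by blast
        have "g \<subseteq> A \<or> g \<inter> A = {}" using A(3) g gf by blast
        then show ?thesis using lg by (auto simp: A'_def)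
      qed
    qed
  qed
qed

lemma cut:
  assumes sg: "simplicial_graph n \<Delta>" and g0: "genus TYPE('k::field) n \<Delta> = 0"
    and e: "e \<in> edges \<Delta>" "v \<noteq> w" "e = {v, w}"
  shows "\<exists>A. v \<in> A \<and> w \<notin> A \<and> (\<forall>g\<in>edges \<Delta>. g \<noteq> e \<longrightarrow> g \<subseteq> A \<or> g \<inter> A = {})"
  using cut_aux[OF sg g0 edges_fin[OF sg] order_refl e] .



lemma ind_single_add: "v \<noteq> w \<Longrightarrow> ind {v} + ind {w} = ind {v, w}"
  by (auto simp: fun_eq_iff ind_def)

lemma zero_add_ind: "(0::nat \<Rightarrow> int) + ind {j} = ind {j}" by simp

lemma supp_ind: "{j. ind F j \<noteq> 0} = F" by (auto simp: ind_def)

locale MT = SF scale n M mult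
  for scale :: "'k::field \<Rightarrow> 'v::ab_group_add \<Rightarrow> 'v" and n M mult +
  fixes \<Delta> :: "nat set set"
  assumes sg: "simplicial_graph n \<Delta>"
    and g0: "genus TYPE('k) n \<Delta> = 0"
    and indec: "indecomposable scale n M mult"
    and suppo: "support_on scale n M mult \<Delta>"
    and dimE: "\<forall>F\<in>edges \<Delta>. vector_space.dim scale (M (ind F)) = 1"
    and dimV: "\<forall>i\<in>{1..n}. vector_space.dim scale (M (ind {i})) = 1"
begin

lemma edge_verts: "e \<in> edges \<Delta> \<Longrightarrow> e \<subseteq> {1..n}" using edges_sub[OF sg] .

lemma onedim_v: "i \<in> {1..n} \<Longrightarrow> \<exists>b\<in>M (ind {i}). b \<noteq> 0 \<and> M (ind {i}) = range (\<lambda>r. scale r b)"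
  using dim_one_basis[OF vs sub[OF ind_degs]] dimV by auto

lemma onedim_e: "e \<in> edges \<Delta> \<Longrightarrow> \<exists>b\<in>M (ind e). b \<noteq> 0 \<and> M (ind e) = range (\<lambda>r. scale r b)"
  using dim_one_basis[OF vs sub[OF ind_degs[OF edge_verts]]] dimE by auto

lemma link_bij:
  assumes e: "{v, w} \<in> edges \<Delta>" and vw: "v \<noteq> w" and nz: "\<exists>x\<in>M (ind {v}). mult w (ind {v}) x \<noteq> 0"
  shows "bij_betw (mult w (ind {v})) (M (ind {v})) (M (ind {v, w}))"
proof -
  interpret vector_space scale by (rule vs)
  have vn: "v \<in> {1..n}" "w \<in> {1..n}" using edge_verts[OF e] by auto
  have dv: "ind {v} \<in> degs n" using vn by (intro ind_degs) auto
  have ee: "ind {v} + ind {w} = ind {v, w}" using ind_single_add[OF vw] .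
  obtain b where b: "b \<in> M (ind {v})" "b \<noteq> 0" "M (ind {v}) = range (\<lambda>r. scale r b)"
    using onedim_v[OF vn(1)] by blast
  obtain b' where b': "b' \<in> M (ind {v, w})" "b' \<noteq> 0" "M (ind {v, w}) = range (\<lambda>r. scale r b')"
    using onedim_e[OF e] by blast
  have ms: "mult w (ind {v}) (scale r b) = scale r (mult w (ind {v}) b)" for r
    using mscale[OF dv vn(2) b(1)] .
  obtain x where x: "x \<in> M (ind {v})" "mult w (ind {v}) x \<noteq> 0" using nz by blast
  obtain r0 where r0: "x = scale r0 b" using x(1) b(3) by blast
  have mb: "mult w (ind {v}) b \<noteq> 0" using x(2) r0 ms by auto
  have mbM: "mult w (ind {v}) b \<in> M (ind {v, w})" using closed[OF dv vn(2) b(1)] ee by simp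
  obtain s0 where s0: "mult w (ind {v}) b = scale s0 b'" using mbM b'(3) by blast
  have s0n: "s0 \<noteq> 0" using mb s0 by auto
  show ?thesis
  proof (rule bij_betw_imageI)
    show "inj_on (mult w (ind {v})) (M (ind {v}))"
    proof
      fix x y assume "x \<in> M (ind {v})" "y \<in> M (ind {v})" "mult w (ind {v}) x = mult w (ind {v}) y"
      moreover obtain rx ry where "x = scale rx b" "y = scale ry b" using calculation(1,2) b(3) by blast
      ultimately show "x = y" using ms mb by auto
    qed
    show "mult w (ind {v}) ` M (ind {v}) = M (ind {v, w})"
    proof
      show "mult w (ind {v}) ` M (ind {v}) \<subseteq> M (ind {v, w})" using closed[OF dv vn(2)] ee by auto
      show "M (ind {v, w}) \<subseteq> mult w (ind {v}) ` M (ind {v})"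
      proof
        fix y assume "y \<in> M (ind {v, w})"
        then obtain s where s: "y = scale s b'" using b'(3) by blast
        have "y = mult w (ind {v}) (scale (s / s0) b)"
          using s s0 s0n ms by simp
        moreover have "scale (s / s0) b \<in> M (ind {v})" using b(3) by blast
        ultimately show "y \<in> mult w (ind {v}) ` M (ind {v})" by blast
      qed
    qed
  qed
qed

end


lemma supp_add: "\<forall>j. 0 \<le> a j \<Longrightarrow> {j. (a + ind {i}) j \<noteq> 0} = insert i {j. a j \<noteq> 0}"
proof -
  assume nn: "\<forall>j. 0 \<le> a j"
  have "a i + 1 \<noteq> 0" using nn[rule_format, of i] by linarith
  then show ?thesis by (auto simp: ind_def)
qed

context SF begin

lemma closure_gen:
  assumes H: "\<And>a i x. a \<in> degs n \<Longrightarrow> \<forall>j. 0 \<le> a j \<Longrightarrow> i \<in> {1..n} \<Longrightarrow> a i = 0 \<Longrightarrow>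
      P {j. a j \<noteq> 0} \<Longrightarrow> \<not> P (insert i {j. a j \<noteq> 0}) \<Longrightarrow> x \<in> M a \<Longrightarrow> mult i a x = 0"
  shows "graded_submodule scale n M mult (\<lambda>a. if P {j. a j \<noteq> 0} then M a else {0})"
  unfolding graded_submodule_def
proof (intro conjI ballI)
  interpret vector_space scale by (rule vs)
  fix a assume a: "a \<in> degs n"
  show "subspace (if P {j. a j \<noteq> 0} then M a else {0})" using sub[OF a] by simp
  show "(if P {j. a j \<noteq> 0} then M a else {0}) \<subseteq> M a" using zero_in[OF a] by auto
next
  fix a i x assume a: "a \<in> degs n" and i: "i \<in> {1..n}" and x: "x \<in> (if P {j. a j \<noteq> 0} then M a else {0})"
  let ?N = "\<lambda>a. if P {j. a j \<noteq> 0} then M a else {0}"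
  have a': "a + ind {i} \<in> degs n" using degs_add[OF a i] .
  have z: "0 \<in> ?N (a + ind {i})" using zero_in[OF a'] by simp
  have xz: "x = 0 \<Longrightarrow> mult i a x \<in> ?N (a + ind {i})" using mzero[OF a i] z by simp
  show "mult i a x \<in> ?N (a + ind {i})"
  proof (cases "P {j. a j \<noteq> 0}")
    case False then show ?thesis using x xz by simp
  next
    case Pa: True
    then have xM: "x \<in> M a" using x by simp
    show ?thesis
    proof (cases "\<forall>j. 0 \<le> a j")
      case False then show ?thesis using notnonneg_zero[OF a False] xM xz by simp
    next
      case nn: True
      have sa: "{j. (a + ind {i}) j \<noteq> 0} = insert i {j. a j \<noteq> 0}" using supp_add[OF nn] .
      have mM: "mult i a x \<in> M (a + ind {i})" using closed[OF a i xM] .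
      show ?thesis
      proof (cases "a i = 0")
        case False
        then have "insert i {j. a j \<noteq> 0} = {j. a j \<noteq> 0}" by auto
        then show ?thesis using sa Pa mM by simp
      next
        case ai: True
        show ?thesis
        proof (cases "P (insert i {j. a j \<noteq> 0})")
          case True then show ?thesis using sa mM by simp
        next
          case False
          have "mult i a x = 0" using H[OF a nn i ai Pa False xM] .
          then show ?thesis using z by simp
        qed
      qed
    qed
  qed
qed

lemma decomp_contra:
  assumes indec: "indecomposable scale n M mult"
    and H1: "\<And>a i x. a \<in> degs n \<Longrightarrow> \<forall>j. 0 \<le> a j \<Longrightarrow> i \<in> {1..n} \<Longrightarrow> a i = 0 \<Longrightarrow>
      P {j. a j \<noteq> 0} \<Longrightarrow> \<not> P (insert i {j. a j \<noteq> 0}) \<Longrightarrow> x \<in> M a \<Longrightarrow> mult i a x = 0"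
    and H2: "\<And>a i x. a \<in> degs n \<Longrightarrow> \<forall>j. 0 \<le> a j \<Longrightarrow> i \<in> {1..n} \<Longrightarrow> a i = 0 \<Longrightarrow>
      \<not> P {j. a j \<noteq> 0} \<Longrightarrow> P (insert i {j. a j \<noteq> 0}) \<Longrightarrow> x \<in> M a \<Longrightarrow> mult i a x = 0"
    and ne1: "a1 \<in> degs n" "P {j. a1 j \<noteq> 0}" "M a1 \<noteq> {0}"
    and ne2: "a2 \<in> degs n" "\<not> P {j. a2 j \<noteq> 0}" "M a2 \<noteq> {0}"
  shows False
proof -
  define N1 where "N1 = (\<lambda>a. if P {j. a j \<noteq> 0} then M a else {0})"
  define N2 where "N2 = (\<lambda>a. if (\<lambda>S. \<not> P S) {j. a j \<noteq> 0} then M a else {0})"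
  have g1: "graded_submodule scale n M mult N1" unfolding N1_def by (rule closure_gen) (rule H1)
  have g2: "graded_submodule scale n M mult N2" unfolding N2_def by (rule closure_gen) (use H2 in auto)
  have n1: "\<exists>a\<in>degs n. N1 a \<noteq> {0}" using ne1 by (auto simp: N1_def)
  have n2: "\<exists>a\<in>degs n. N2 a \<noteq> {0}" using ne2 by (auto simp: N2_def)
  have ds: "\<forall>a\<in>degs n. N1 a \<inter> N2 a = {0} \<and> M a = {x + y | x y. x \<in> N1 a \<and> y \<in> N2 a}"
  proof
    fix a assume a: "a \<in> degs n"
    show "N1 a \<inter> N2 a = {0} \<and> M a = {x + y | x y. x \<in> N1 a \<and> y \<in> N2 a}"
      using zero_in[OF a] by (auto simp: N1_def N2_def)
  qed
  show False using indec g1 g2 n1 n2 ds unfolding indecomposable_def by blast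
qed

end


context MT begin

lemma single_not_edge: "{u} \<notin> edges \<Delta>" by (simp add: edges_def)

lemma face_card: "G \<in> \<Delta> \<Longrightarrow> card G \<le> 2" using sg by (simp add: simplicial_graph_def)

lemma comm0: "p \<in> {1..n} \<Longrightarrow> q \<in> {1..n} \<Longrightarrow> x \<in> M 0 \<Longrightarrow>
   mult q (ind {p}) (mult p 0 x) = mult p (ind {q}) (mult q 0 x)"
  using comm[OF zero_degs, of q p x] by simp

lemma mult0_in: "p \<in> {1..n} \<Longrightarrow> x \<in> M 0 \<Longrightarrow> mult p 0 x \<in> M (ind {p})"
  using closed[OF zero_degs, of p x] by simp

lemma ind1_degs: "p \<in> {1..n} \<Longrightarrow> ind {p} \<in> degs n" by (rule ind_degs) auto

lemma ind_supp_single: "a \<in> degs n \<Longrightarrow> {j. a j \<noteq> 0} = {} \<Longrightarrow> a = 0"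
  by (auto simp: fun_eq_iff)

lemma transport': "a \<in> degs n \<Longrightarrow> \<forall>j. 0 \<le> a j \<Longrightarrow> i \<in> {1..n} \<Longrightarrow> a i = 0 \<Longrightarrow>
   {j. a j \<noteq> 0} = F \<Longrightarrow> \<forall>y\<in>M (ind F). mult i (ind F) y = 0 \<Longrightarrow> x \<in> M a \<Longrightarrow> mult i a x = 0"
  using transport by blast

end


locale ZL = MT scale n M mult \<Delta>
  for scale :: "'k::field \<Rightarrow> 'v::ab_group_add \<Rightarrow> 'v" and n M mult \<Delta> +
  fixes v w :: nat
  assumes e: "{v, w} \<in> edges \<Delta>" and vw: "v \<noteq> w"
    and zl: "\<forall>x\<in>M (ind {v}). mult w (ind {v}) x = 0"
begin

definition nz :: "nat \<Rightarrow> nat set \<Rightarrow> bool" where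
  "nz u g \<longleftrightarrow> (\<exists>w'. g = {u, w'} \<and> u \<noteq> w' \<and> (\<exists>x\<in>M (ind {u}). mult w' (ind {u}) x \<noteq> 0))"

definition L :: "(nat set \<times> nat set) set" where
  "L = {(G, H). \<exists>u g. g \<in> edges \<Delta> \<and> u \<in> g \<and> nz u g \<and> ((G, H) = ({u}, g) \<or> (G, H) = (g, {u}))}"

definition C :: "nat set set" where
  "C = {G. ({v, w}, G) \<in> L\<^sup>*}"

lemma vwn: "v \<in> {1..n}" "w \<in> {1..n}" using edge_verts[OF e] by auto

lemma nz_v: "\<not> nz v {v, w}"
proof
  assume "nz v {v, w}"
  then obtain w' x where "{v, w} = {v, w'}" "v \<noteq> w'" "x \<in> M (ind {v})" "mult w' (ind {v}) x \<noteq> 0"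
    unfolding nz_def by blast
  moreover then have "w' = w" using vw by (auto simp: doubleton_eq_iff)
  ultimately show False using zl by blast
qed

lemma L_step: "(G, H) \<in> L \<Longrightarrow> \<exists>u g. g \<in> edges \<Delta> \<and> u \<in> g \<and> nz u g \<and> ((G = {u} \<and> H = g) \<or> (G = g \<and> H = {u}))"
  unfolding L_def by blast

lemma L_intro1: "g \<in> edges \<Delta> \<Longrightarrow> u \<in> g \<Longrightarrow> nz u g \<Longrightarrow> ({u}, g) \<in> L"
  unfolding L_def by blast

lemma L_intro2: "g \<in> edges \<Delta> \<Longrightarrow> u \<in> g \<Longrightarrow> nz u g \<Longrightarrow> (g, {u}) \<in> L"
  unfolding L_def by blast

lemma e_not_single: "{v, w} \<noteq> {u}" using vw by auto

lemma C_step: "G \<in> C \<Longrightarrow> (G, H) \<in> L \<Longrightarrow> H \<in> C"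
  unfolding C_def by (auto intro: rtrancl_into_rtrancl)

lemma eC: "{v, w} \<in> C" by (simp add: C_def)

end


context ZL begin

lemma C_shape:
  assumes A: "v \<in> A" "w \<notin> A" "\<forall>g\<in>edges \<Delta>. g \<noteq> {v, w} \<longrightarrow> g \<subseteq> A \<or> g \<inter> A = {}"
    and G: "G \<in> C"
  shows "G = {v, w} \<or> (\<exists>u. G = {u} \<and> u \<notin> A \<and> u \<in> {1..n}) \<or> (G \<in> edges \<Delta> \<and> G \<noteq> {v, w} \<and> G \<inter> A = {})"
proof -
  have "({v, w}, G) \<in> L\<^sup>*" using G by (simp add: C_def)
  then show ?thesis
  proof (induction rule: rtrancl_induct)
    case base then show ?case by simp
  next
    case (step y z)
    obtain u g where ug: "g \<in> edges \<Delta>" "u \<in> g" "nz u g" "(y = {u} \<and> z = g) \<or> (y = g \<and> z = {u})"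
      using L_step[OF step.hyps(2)] by blast
    have un: "u \<in> {1..n}" using edge_verts[OF ug(1)] ug(2) by blast
    from ug(4) show ?case
    proof
      assume yz: "y = {u} \<and> z = g"
      have "u \<notin> A" using step.IH yz e_not_single[of u] single_not_edge[of u] by auto
      show ?case
      proof (cases "g = {v, w}")
        case True then show ?thesis using yz by simp
      next
        case False
        then have "g \<subseteq> A \<or> g \<inter> A = {}" using A(3) ug(1) by blast
        then have "g \<inter> A = {}" using \<open>u \<notin> A\<close> ug(2) by blast
        then show ?thesis using yz False ug(1) by simp
      qed
    next
      assume yz: "y = g \<and> z = {u}"
      have "u \<notin> A"
      proof (cases "g = {v, w}")
        case True
        then have "u = v \<or> u = w" using ug(2) by blast
        moreover have "u \<noteq> v" using nz_v ug(3) True by blast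
        ultimately show ?thesis using A(2) by blast
      next
        case False
        then have "g \<inter> A = {}" using step.IH yz single_not_edge ug(1) by blast
        then show ?thesis using ug(2) by blast
      qed
      then show ?case using yz un by blast
    qed
  qed
qed

lemma alpha:
  assumes G: "G \<in> C"
  shows "(\<forall>u. G = {u} \<longrightarrow> (\<forall>x\<in>M 0. mult u 0 x = 0)) \<and>
    (G \<in> edges \<Delta> \<longrightarrow> (\<forall>p q. G = {p, q} \<longrightarrow> p \<noteq> q \<longrightarrow> (\<forall>x\<in>M 0. mult q (ind {p}) (mult p 0 x) = 0)))"
proof -
  have "({v, w}, G) \<in> L\<^sup>*" using G by (simp add: C_def)
  then show ?thesis
  proof (induction rule: rtrancl_induct)
    case base
    show ?case
    proof (intro conjI allI impI ballI)
      fix u x assume "{v, w} = {u}" then show "mult u 0 x = 0" using e_not_single by blast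
    next
      fix p q x assume pq: "{v, w} = {p, q}" "p \<noteq> q" and x: "x \<in> M 0"
      have z: "mult w (ind {v}) (mult v 0 x) = 0" using zl mult0_in[OF vwn(1) x] by blast
      show "mult q (ind {p}) (mult p 0 x) = 0"
      proof (cases "p = v")
        case True then have "q = w" using pq vw by (auto simp: doubleton_eq_iff)
        then show ?thesis using z True by simp
      next
        case False then have "p = w" "q = v" using pq vw by (auto simp: doubleton_eq_iff)
        then show ?thesis using z comm0[OF vwn(2) vwn(1) x] by simp
      qed
    qed
  next
    case (step y z)
    obtain u g where ug: "g \<in> edges \<Delta>" "u \<in> g" "nz u g" "(y = {u} \<and> z = g) \<or> (y = g \<and> z = {u})"
      using L_step[OF step.hyps(2)] by blast
    have gn: "g \<subseteq> {1..n}" using edge_verts[OF ug(1)] .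
    from ug(4) show ?case
    proof
      assume yz: "y = {u} \<and> z = g"
      have au: "\<forall>x\<in>M 0. mult u 0 x = 0" using step.IH yz by blast
      show ?case
      proof (intro conjI allI impI ballI)
        fix u' x assume "z = {u'}" then show "mult u' 0 x = 0" using yz ug(1) single_not_edge by metis
      next
        fix p q x assume pq: "z = {p, q}" "p \<noteq> q" and x: "x \<in> M 0"
        have pn: "p \<in> {1..n}" "q \<in> {1..n}" using pq yz gn by auto
        have "u = p \<or> u = q" using ug(2) pq yz by blast
        then show "mult q (ind {p}) (mult p 0 x) = 0"
        proof
          assume "u = p"
          then show ?thesis using au x mzero[OF ind1_degs[OF pn(1)] pn(2)] by simp
        next
          assume "u = q"
          then show ?thesis using au x comm0[OF pn x] mzero[OF ind1_degs[OF pn(2)] pn(1)] by simp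
        qed
      qed
    next
      assume yz: "y = g \<and> z = {u}"
      obtain w' x0 where w': "g = {u, w'}" "u \<noteq> w'" "x0 \<in> M (ind {u})" "mult w' (ind {u}) x0 \<noteq> 0"
        using ug(3) unfolding nz_def by blast
      have un: "u \<in> {1..n}" "w' \<in> {1..n}" using gn w'(1) by auto
      have bj: "bij_betw (mult w' (ind {u})) (M (ind {u})) (M (ind {u, w'}))"
        using link_bij[of u w'] ug(1) w' by blast
      have ge: "\<forall>x\<in>M 0. mult w' (ind {u}) (mult u 0 x) = 0" using step.IH yz ug(1) w'(1,2) by blast
      show ?case
      proof (intro conjI allI impI ballI)
        fix u' x assume zu: "z = {u'}" and x: "x \<in> M 0"
        then have uu: "u' = u" using yz by simp
        have "mult w' (ind {u}) (mult u 0 x) = mult w' (ind {u}) 0"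
          using ge x mzero[OF ind1_degs[OF un(1)] un(2)] by simp
        then have "mult u 0 x = 0"
          using bj mult0_in[OF un(1) x] zero_in[OF ind1_degs[OF un(1)]]
          unfolding bij_betw_def inj_on_def by blast
        then show "mult u' 0 x = 0" using uu by simp
      next
        fix p q x assume "z \<in> edges \<Delta>" then show "mult q (ind {p}) (mult p 0 x) = 0"
          using yz single_not_edge by simp
      qed
    qed
  qed
qed

end


context ZL begin

lemma C_cases:
  assumes "G \<in> C"
  shows "(\<exists>u. G = {u} \<and> u \<in> {1..n}) \<or> G \<in> edges \<Delta>"
proof -
  obtain A where A: "v \<in> A" "w \<notin> A" "\<forall>g\<in>edges \<Delta>. g \<noteq> {v, w} \<longrightarrow> g \<subseteq> A \<or> g \<inter> A = {}"
    using cut[OF sg g0 e vw refl] by blast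
  show ?thesis using C_shape[OF A assms] e by blast
qed

lemma vC: "{v} \<notin> C"
proof
  assume vc: "{v} \<in> C"
  obtain A where A: "v \<in> A" "w \<notin> A" "\<forall>g\<in>edges \<Delta>. g \<noteq> {v, w} \<longrightarrow> g \<subseteq> A \<or> g \<inter> A = {}"
    using cut[OF sg g0 e vw refl] by blast
  show False using C_shape[OF A vc] A(1) e_not_single[of v] single_not_edge[of v] by auto
qed

lemma contra: False
proof (rule decomp_contra[OF indec, where P = "\<lambda>S. S \<in> C"])
  fix a i x
  assume a: "a \<in> degs n" and nn: "\<forall>j. 0 \<le> a j" and i: "i \<in> {1..n}" and ai: "a i = 0"
    and FC: "{j. a j \<noteq> 0} \<in> C" and GC: "insert i {j. a j \<noteq> 0} \<notin> C" and x: "x \<in> M a"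
  define F where "F = {j. a j \<noteq> 0}"
  have iF: "i \<notin> F" using ai by (simp add: F_def)
  have a': "a + ind {i} \<in> degs n" using degs_add[OF a i] .
  have nn': "\<forall>j. 0 \<le> (a + ind {i}) j" using nn by (simp add: ind_def)
  have sa: "{j. (a + ind {i}) j \<noteq> 0} = insert i F" using supp_add[OF nn] by (simp add: F_def)
  have mM: "mult i a x \<in> M (a + ind {i})" using closed[OF a i x] .
  show "mult i a x = 0"
  proof (cases "insert i F \<in> \<Delta>")
    case False
    have "{j. (a + ind {i}) j \<noteq> 0} \<notin> \<Delta>" unfolding sa by (rule False)
    then have "M (a + ind {i}) = {0}" by (rule nonface_zero[OF suppo a' nn'])
    then show ?thesis using mM by simp
  next
    case True
    have cF: "(\<exists>u. F = {u} \<and> u \<in> {1..n}) \<or> F \<in> edges \<Delta>" using C_cases[OF FC] unfolding F_def .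
    have "\<not> F \<in> edges \<Delta>"
    proof
      assume "F \<in> edges \<Delta>"
      then have "card F = 2" "finite F" by (auto simp: edges_def intro: card_ge_0_finite)
      then have "card (insert i F) = 3" using iF by simp
      then show False using face_card[OF True] by simp
    qed
    then obtain u where u: "F = {u}" "u \<in> {1..n}" using cF by blast
    have ui: "u \<noteq> i" using iF u by auto
    have Ge: "{u, i} \<in> edges \<Delta>" using True u ui by (simp add: edges_def insert_commute)
    have "\<not> nz u {u, i}"
    proof
      assume "nz u {u, i}"
      then have "({u}, {u, i}) \<in> L" using L_intro1[OF Ge] by simp
      then have "{u, i} \<in> C" using C_step FC u by (simp add: F_def)
      then show False using GC u by (simp add: F_def insert_commute)
    qed
    then have zz: "\<forall>y\<in>M (ind {u}). mult i (ind {u}) y = 0" using ui unfolding nz_def by blast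
    show ?thesis using transport'[OF a nn i ai _ zz x] u by (simp add: F_def)
  qed
next
  fix a i x
  assume a: "a \<in> degs n" and nn: "\<forall>j. 0 \<le> a j" and i: "i \<in> {1..n}" and ai: "a i = 0"
    and FC: "{j. a j \<noteq> 0} \<notin> C" and GC: "insert i {j. a j \<noteq> 0} \<in> C" and x: "x \<in> M a"
  define F where "F = {j. a j \<noteq> 0}"
  have iF: "i \<notin> F" using ai by (simp add: F_def)
  have cG: "(\<exists>u. insert i F = {u} \<and> u \<in> {1..n}) \<or> insert i F \<in> edges \<Delta>"
    using C_cases[OF GC] unfolding F_def .
  then show "mult i a x = 0"
  proof
    assume "\<exists>u. insert i F = {u} \<and> u \<in> {1..n}"
    then have "F = {}" using iF by auto
    then have a0: "a = 0" using ind_supp_single[OF a] by (simp add: F_def)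
    have "insert i F = {i}" using \<open>F = {}\<close> by simp
    then have "\<forall>x\<in>M 0. mult i 0 x = 0" using alpha GC by (simp add: F_def)
    then show ?thesis using x a0 by simp
  next
    assume Ge: "insert i F \<in> edges \<Delta>"
    then have c2: "card (insert i F) = 2" by (simp add: edges_def)
    then have "finite (insert i F)" by (intro card_ge_0_finite) simp
    note c2 this
    then have "card F = 1" using iF by simp
    then obtain u where u: "F = {u}" by (auto simp: card_Suc_eq)
    have ui: "u \<noteq> i" using iF u by auto
    have Ge': "{u, i} \<in> edges \<Delta>" using Ge u by (simp add: insert_commute)
    have "\<not> nz u {u, i}"
    proof
      assume "nz u {u, i}"
      then have "({u, i}, {u}) \<in> L" using L_intro2[OF Ge'] by simp
      then have "{u} \<in> C" using C_step GC u by (simp add: F_def insert_commute)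
      then show False using FC u by (simp add: F_def)
    qed
    then have zz: "\<forall>y\<in>M (ind {u}). mult i (ind {u}) y = 0" using ui unfolding nz_def by blast
    show ?thesis using transport'[OF a nn i ai _ zz x] u by (simp add: F_def)
  qed
next
  show "ind {v, w} \<in> degs n" using edge_verts[OF e] by (rule ind_degs)
  show "{j. ind {v, w} j \<noteq> 0} \<in> C" using eC by (simp add: supp_ind)
  show "M (ind {v, w}) \<noteq> {0}" using onedim_e[OF e] by blast
  show "ind {v} \<in> degs n" using ind1_degs[OF vwn(1)] .
  show "{j. ind {v} j \<noteq> 0} \<notin> C" using vC by (simp add: supp_ind)
  show "M (ind {v}) \<noteq> {0}" using onedim_v[OF vwn(1)] by blast
qed

end

context MT begin

lemma all_links:
  assumes e: "{v, w} \<in> edges \<Delta>" and vw: "v \<noteq> w"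
  shows "\<exists>x\<in>M (ind {v}). mult w (ind {v}) x \<noteq> 0"
proof (rule ccontr)
  assume "\<not> ?thesis"
  then have zl: "\<forall>x\<in>M (ind {v}). mult w (ind {v}) x = 0" by blast
  interpret ZL scale n M mult \<Delta> v w by unfold_locales (use e vw zl in auto)
  show False by (rule contra)
qed

end


context MT begin

lemma consistent:
  "finite E \<Longrightarrow> E \<subseteq> edges \<Delta> \<Longrightarrow> \<exists>bv. (\<forall>u\<in>{1..n}. bv u \<in> M (ind {u}) \<and> bv u \<noteq> 0) \<and>
     (\<forall>g\<in>E. \<forall>p q. g = {p, q} \<longrightarrow> p \<noteq> q \<longrightarrow> mult q (ind {p}) (bv p) = mult p (ind {q}) (bv q))"
proof (induction E rule: finite_psubset_induct)
  case (psubset E)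
  show ?case
  proof (cases "E = {}")
    case True
    define bv where "bv = (\<lambda>u. SOME b. b \<in> M (ind {u}) \<and> b \<noteq> 0)"
    have "\<forall>u\<in>{1..n}. bv u \<in> M (ind {u}) \<and> bv u \<noteq> 0"
    proof
      fix u assume u: "u \<in> {1..n}"
      have "\<exists>b. b \<in> M (ind {u}) \<and> b \<noteq> 0" using onedim_v[OF u] by blast
      then show "bv u \<in> M (ind {u}) \<and> bv u \<noteq> 0" unfolding bv_def by (rule someI_ex)
    qed
    then show ?thesis using True by (intro exI[of _ bv]) simp
  next
    case False
    obtain f l where f: "f \<in> E" "l \<in> f" and uq: "\<forall>h\<in>E. l \<in> h \<longrightarrow> h = f"
      using leaf[OF sg g0 psubset.prems False] by blast
    have fe: "f \<in> edges \<Delta>" using f psubset.prems by blast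
    obtain p where p: "p \<noteq> l" "f = {l, p}" using edge_other[OF fe f(2)] by blast
    have lpn: "l \<in> {1..n}" "p \<in> {1..n}" using edge_verts[OF fe] p by auto
    have sub: "E - {f} \<subset> E" using f by blast
    have sub2: "E - {f} \<subseteq> edges \<Delta>" using psubset.prems by blast
    obtain bv where bv: "\<forall>u\<in>{1..n}. bv u \<in> M (ind {u}) \<and> bv u \<noteq> 0"
      "\<forall>g\<in>E - {f}. \<forall>p q. g = {p, q} \<longrightarrow> p \<noteq> q \<longrightarrow> mult q (ind {p}) (bv p) = mult p (ind {q}) (bv q)"
      using psubset.IH[OF sub sub2] by (elim exE conjE) (rule that)
    have e1: "{l, p} \<in> edges \<Delta>" using fe p by simp
    have e2: "{p, l} \<in> edges \<Delta>" using e1 by (simp add: insert_commute)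
    have bj1: "bij_betw (mult p (ind {l})) (M (ind {l})) (M (ind {l, p}))"
      using link_bij[OF e1 p(1)[symmetric] all_links[OF e1 p(1)[symmetric]]] .
    have bj2: "bij_betw (mult l (ind {p})) (M (ind {p})) (M (ind {p, l}))"
      using link_bij[OF e2 p(1) all_links[OF e2 p(1)]] .
    define y where "y = mult l (ind {p}) (bv p)"
    have bp: "bv p \<in> M (ind {p})" "bv p \<noteq> 0" using bv(1) lpn by auto
    have ipl: "ind {p} + ind {l} = ind {l, p}" using p(1) by (auto simp: fun_eq_iff ind_def)
    have yM: "y \<in> M (ind {l, p})" unfolding y_def ipl[symmetric]
      by (rule closed[OF ind1_degs[OF lpn(2)] lpn(1) bp(1)])
    have yn: "y \<noteq> 0"
    proof
      assume "y = 0"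
      then have "mult l (ind {p}) (bv p) = mult l (ind {p}) 0"
        using mzero[OF ind1_degs[OF lpn(2)] lpn(1)] by (simp add: y_def)
      then have "bv p = 0"
        using inj_onD[OF bij_betw_imp_inj_on[OF bj2] _ bp(1) zero_in[OF ind1_degs[OF lpn(2)]]] by simp
      then show False using bp(2) by simp
    qed
    have "y \<in> mult p (ind {l}) ` M (ind {l})" using bij_betw_imp_surj_on[OF bj1] yM by simp
    then obtain x where x: "x \<in> M (ind {l})" "mult p (ind {l}) x = y" by (elim imageE) simp
    have xn: "x \<noteq> 0"
    proof
      assume "x = 0"
      then have "y = 0" using x(2) mzero[OF ind1_degs[OF lpn(1)] lpn(2)] by simp
      then show False using yn by simp
    qed
    define bv' where "bv' = bv(l := x)"
    show ?thesis
    proof (intro exI[of _ bv'] conjI ballI allI impI)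
      fix u assume "u \<in> {1..n}"
      then show "bv' u \<in> M (ind {u})" "bv' u \<noteq> 0" using bv(1) x(1) xn by (auto simp: bv'_def)
    next
      fix g p' q' assume g: "g \<in> E" "g = {p', q'}" "p' \<noteq> q'"
      show "mult q' (ind {p'}) (bv' p') = mult p' (ind {q'}) (bv' q')"
      proof (cases "g = f")
        case True
        then have "(p' = l \<and> q' = p) \<or> (p' = p \<and> q' = l)" using g p by (auto simp: doubleton_eq_iff)
        then show ?thesis
        proof
          assume "p' = l \<and> q' = p"
          then show ?thesis using x(2) p(1) by (simp add: bv'_def y_def)
        next
          assume "p' = p \<and> q' = l"
          then show ?thesis using x(2) p(1) by (simp add: bv'_def y_def)
        qed
      next
        case False
        then have "l \<notin> g" using uq g(1) by blast
        then have "p' \<noteq> l" "q' \<noteq> l" using g(2) by auto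
        then show ?thesis using bv(2) g False by (simp add: bv'_def)
      qed
    qed
  qed
qed

end


context MT begin

lemma final:
  "\<exists>bv :: nat \<Rightarrow> 'v. \<exists>be :: nat set \<Rightarrow> 'v.
           (\<forall>v\<in>{1..n}. bv v \<in> M (ind {v}) \<and> bv v \<noteq> 0) \<and>
           (\<forall>e\<in>edges \<Delta>. be e \<in> M (ind e) \<and> be e \<noteq> 0) \<and>
           (\<forall>e\<in>edges \<Delta>. \<forall>v\<in>e. phi mult n {v} e (bv v) = be e)"
proof -
  obtain bv where bv: "\<forall>u\<in>{1..n}. bv u \<in> M (ind {u}) \<and> bv u \<noteq> 0"
    "\<forall>g\<in>edges \<Delta>. \<forall>p q. g = {p, q} \<longrightarrow> p \<noteq> q \<longrightarrow> mult q (ind {p}) (bv p) = mult p (ind {q}) (bv q)"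
    using consistent[OF edges_fin[OF sg] order_refl] by (elim exE conjE) (rule that)
  define be where "be = (\<lambda>e. mult (Max e) (ind {Min e}) (bv (Min e)))"
  have bee: "be e = mult q (ind {p}) (bv p)" if "p < q" "e = {p, q}" for e p q
    using that by (simp add: be_def)
  have A2: "\<forall>e\<in>edges \<Delta>. be e \<in> M (ind e) \<and> be e \<noteq> 0"
  proof
    fix e assume e: "e \<in> edges \<Delta>"
    obtain p q where pq: "p < q" "e = {p, q}" using edge_lt[OF e] by blast
    have pn: "p \<in> {1..n}" "q \<in> {1..n}" using edge_verts[OF e] pq by auto
    have pq': "p \<noteq> q" using pq by simp
    have e': "{p, q} \<in> edges \<Delta>" using e pq by simp
    have bj: "bij_betw (mult q (ind {p})) (M (ind {p})) (M (ind {p, q}))"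
      using link_bij[OF e' pq' all_links[OF e' pq']] .
    have bp: "bv p \<in> M (ind {p})" "bv p \<noteq> 0" using bv(1) pn by auto
    have "mult q (ind {p}) (bv p) \<in> M (ind {p, q})" using bij_betw_imp_surj_on[OF bj] bp(1) by blast
    moreover have "mult q (ind {p}) (bv p) \<noteq> 0"
    proof
      assume "mult q (ind {p}) (bv p) = 0"
      then have "mult q (ind {p}) (bv p) = mult q (ind {p}) 0" using mzero[OF ind1_degs[OF pn(1)] pn(2)] by simp
      then have "bv p = 0"
        using inj_onD[OF bij_betw_imp_inj_on[OF bj] _ bp(1) zero_in[OF ind1_degs[OF pn(1)]]] by simp
      then show False using bp(2) by simp
    qed
    ultimately show "be e \<in> M (ind e) \<and> be e \<noteq> 0" using bee[OF pq] pq(2) by simp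
  qed
  have A3: "\<forall>e\<in>edges \<Delta>. \<forall>v\<in>e. phi mult n {v} e (bv v) = be e"
  proof (intro ballI)
    fix e v assume e: "e \<in> edges \<Delta>" and v: "v \<in> e"
    obtain p q where pq: "p < q" "e = {p, q}" using edge_lt[OF e] by blast
    have pn: "p \<in> {1..n}" "q \<in> {1..n}" using edge_verts[OF e] pq by auto
    have pq': "p \<noteq> q" "q \<noteq> p" using pq by simp_all
    have "v = p \<or> v = q" using v pq by blast
    then show "phi mult n {v} e (bv v) = be e"
    proof
      assume "v = p"
      then show ?thesis using phi_edge[OF pq'(1) pn(2)] bee[OF pq] pq(2) by simp
    next
      assume vq: "v = q"
      have "e = {q, p}" using pq(2) by auto
      then have "phi mult n {v} e (bv v) = mult p (ind {q}) (bv q)"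
        using phi_edge[OF pq'(2) pn(1)] vq by simp
      also have "\<dots> = mult q (ind {p}) (bv p)" using bv(2) e pq pq'(1) by metis
      also have "\<dots> = be e" using bee[OF pq] by simp
      finally show ?thesis .
    qed
  qed
  show ?thesis using bv(1) A2 A3 by blast
qed

end

theorem mainTheorem7:
  fixes scale :: "'k::field \<Rightarrow> 'v::ab_group_add \<Rightarrow> 'v"
    and n :: nat and \<Delta> :: "nat set set"
    and M :: "(nat \<Rightarrow> int) \<Rightarrow> 'v set"
    and mult :: "nat \<Rightarrow> (nat \<Rightarrow> int) \<Rightarrow> 'v \<Rightarrow> 'v"
  assumes "simplicial_graph n \<Delta>"
    and "connected_graph n \<Delta>"
    and "genus TYPE('k) n \<Delta> = 0"
    and "square_free scale n M mult"
    and "indecomposable scale n M mult"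
    and "support_on scale n M mult \<Delta>"
    and "\<forall>F\<in>edges \<Delta>. vector_space.dim scale (M (ind F)) = 1"
    and "\<forall>i\<in>{1..n}. int (vector_space.dim scale (M (ind {i}))) - 1 = 0"
  shows "\<exists>bv :: nat \<Rightarrow> 'v. \<exists>be :: nat set \<Rightarrow> 'v.
           (\<forall>v\<in>{1..n}. bv v \<in> M (ind {v}) \<and> bv v \<noteq> 0) \<and>
           (\<forall>e\<in>edges \<Delta>. be e \<in> M (ind e) \<and> be e \<noteq> 0) \<and>
           (\<forall>e\<in>edges \<Delta>. \<forall>v\<in>e. phi mult n {v} e (bv v) = be e)"
proof -
  have dv: "\<forall>i\<in>{1..n}. vector_space.dim scale (M (ind {i})) = 1" using assms(8) by auto
  interpret MT scale n M mult \<Delta>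
    by unfold_locales (use assms dv in auto)
  show ?thesis by (rule final)
qed


end
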